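(* Let $A$ be a finitely generated free abelian group of rank $r$ and $M$ a finitely generated $\mathbb{Z}A$-module. Assume that for each subgroup $B\subset A$ with $\mathrm{rank}(B)<r$ there exist a positive integer $k$ and elements $a_1,\dots,a_k\in A\setminus B$ such that the product $(e_{a_1}-1)\cdots(e_{a_k}-1)$ annihilates $M$. Then $M$ is finitely generated as an abelian group.
   Context: $A$ is written additively; for $a\in A$, $e_a$ denotes the corresponding basis element of the group ring $\mathbb{Z}A$ (so $e_ae_b=e_{a+b}$ and $\mathbb{Z}A$ is a Laurent polynomial ring in $r$ variables). *)

theory Defs
  imports "HOL-Analysis.Analysis" "HOL-Library.Poly_Mapping"
begin

text \<open>The free abelian group A of rank r = CARD('n) is modelled as int ^ 'n.
  Its integral group ring ZA is the ring of finitely supported functions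
  A \<Rightarrow>0 int with convolution product.\<close>

type_synonym 'n grp = "int ^ 'n"
type_synonym 'n grpring = "('n grp \<Rightarrow>\<^sub>0 int)"

definition e :: "'n::finite grp \<Rightarrow> 'n grpring" where
  "e a = Poly_Mapping.single a 1"

definition is_subgroup :: "'n::finite grp set \<Rightarrow> bool" where
  "is_subgroup B \<longleftrightarrow> 0 \<in> B \<and> (\<forall>x\<in>B. \<forall>y\<in>B. x - y \<in> B)"

definition zindep :: "'n::finite grp set \<Rightarrow> bool" where
  "zindep S \<longleftrightarrow> finite S \<and>
     (\<forall>c :: 'n grp \<Rightarrow> int. (\<Sum>s\<in>S. (\<chi> i. c s * s $ i)) = 0 \<longrightarrow> (\<forall>s\<in>S. c s = 0))"

definition grp_rank :: "'n::finite grp set \<Rightarrow> nat" where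
  "grp_rank B = Max {card S | S. S \<subseteq> B \<and> zindep S}"

definition fg_abelian :: "('n::finite grpring \<Rightarrow> 'm::ab_group_add \<Rightarrow> 'm) \<Rightarrow> bool" where
  "fg_abelian smul \<longleftrightarrow> (\<exists>S. finite S \<and>
      (\<forall>m. \<exists>c :: 'm \<Rightarrow> int. m = (\<Sum>s\<in>S. smul (of_int (c s)) s)))"

end

theory Submission
  imports Defs
begin

definition rv :: "int ^ 'n::finite \<Rightarrow> real ^ 'n" where
  "rv a = (\<chi> i. real_of_int (a $ i))"

definition qv :: "int ^ 'n::finite \<Rightarrow> rat ^ 'n" where
  "qv a = (\<chi> i. rat_of_int (a $ i))"

lemma rv_add: "rv (a + b) = rv a + rv b" and rv_diff: "rv (a - b) = rv a - rv b"
  and rv_minus: "rv (- a) = - rv a" and rv_zero: "rv 0 = 0"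
  by (auto simp: rv_def vec_eq_iff)

lemma inj_qv: "inj qv"
  by (auto simp: inj_def qv_def vec_eq_iff)

lemma clear_denoms:
  fixes c :: "'a \<Rightarrow> rat" assumes "finite S"
  obtains D :: int and d :: "'a \<Rightarrow> int" where "D > 0" "\<And>s. s \<in> S \<Longrightarrow> rat_of_int (d s) = rat_of_int D * c s"
proof -
  define D where "D = (\<Prod>s\<in>S. snd (quotient_of (c s)))"
  have pos: "snd (quotient_of (c s)) > 0" for s by (simp add: quotient_of_denom_pos')
  have "D > 0" unfolding D_def using pos by (simp add: prod_pos)
  define d where "d s = fst (quotient_of (c s)) * (D div snd (quotient_of (c s)))" for s
  have "rat_of_int (d s) = rat_of_int D * c s" if "s \<in> S" for s
  proof -
    obtain p q where pq: "quotient_of (c s) = (p, q)" by fastforce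
    have q: "q > 0" using pos[of s] pq by simp
    have "q dvd D" unfolding D_def using pq that assms
      by (metis dvd_prodI snd_conv)
    then obtain t where t: "D = q * t" by blast
    have cs: "c s = of_int p / of_int q" using pq by (simp add: quotient_of_div)
    have "d s = p * t" unfolding d_def pq t using q by simp
    then show ?thesis using q by (simp add: cs t field_simps)
  qed
  then show ?thesis using that \<open>D > 0\<close> by blast
qed

lemma zindep_qv:
  fixes S :: "(int ^ 'n::finite) set"
  assumes "zindep S"
  shows "vec.independent (qv ` S)"
proof -
  have fin: "finite S" using assms zindep_def by blast
  show ?thesis unfolding vec.independent_explicit
  proof (intro conjI allI impI ballI)
    show "finite (qv ` S)" using fin by simp
    fix c w assume eq: "(\<Sum>v\<in>qv ` S. c v *s v) = 0" and w: "w \<in> qv ` S"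
    obtain s0 where s0: "s0 \<in> S" "w = qv s0" using w by blast
    have eq2: "(\<Sum>s\<in>S. c (qv s) *s qv s) = 0"
      using eq by (simp add: sum.reindex inj_on_subset[OF inj_qv])
    obtain D d where D: "D > 0" and d: "\<And>s. s \<in> S \<Longrightarrow> rat_of_int (d s) = rat_of_int D * c (qv s)"
      using clear_denoms[OF fin, of "\<lambda>s. c (qv s)"] by blast
    have "(\<Sum>s\<in>S. (\<chi> i. d s * s $ i)) = 0"
    proof (subst vec_eq_iff, intro allI)
      fix i
      have "rat_of_int ((\<Sum>s\<in>S. (\<chi> i. d s * s $ i)) $ i) = (\<Sum>s\<in>S. rat_of_int (d s) * rat_of_int (s $ i))"
        by (simp add: sum_component)
      also have "\<dots> = (\<Sum>s\<in>S. rat_of_int D * (c (qv s) * rat_of_int (s $ i)))"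
        by (rule sum.cong) (auto simp: d)
      also have "\<dots> = rat_of_int D * (\<Sum>s\<in>S. c (qv s) *s qv s) $ i"
        by (simp add: sum_component sum_distrib_left qv_def)
      also have "\<dots> = 0" using eq2 by simp
      finally have "rat_of_int ((\<Sum>s\<in>S. (\<chi> i. d s * s $ i)) $ i) = 0" .
      then show "(\<Sum>s\<in>S. (\<chi> i. d s * s $ i)) $ i = 0 $ i" by (simp only: of_int_eq_0_iff zero_index)
    qed
    then have "d s0 = 0" using assms s0 unfolding zindep_def by blast
    then show "c w = 0" using d[OF s0(1)] D s0 by simp
  qed
qed

lemma inner_rv: "v \<bullet> rv a = (\<Sum>i\<in>UNIV. v $ i * real_of_int (a $ i))"
  by (simp add: inner_vec_def rv_def)

lemma hyper_card:
  fixes v :: "real ^ 'n::finite" and S :: "(int ^ 'n) set"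
  assumes v: "v \<noteq> 0" and zi: "zindep S" and sub: "S \<subseteq> {a. v \<bullet> rv a = 0}"
  shows "card S < CARD('n)"
proof -
  have ind: "vec.independent (qv ` S)" using zindep_qv[OF zi] .
  have cS: "card (qv ` S) = card S" by (simp add: card_image inj_on_subset[OF inj_qv])
  have "card (qv ` S) \<le> vec.dim (qv ` S)" using vec.independent_bound_general[OF ind] by simp
  also have "\<dots> \<le> CARD('n)" using vec.dim_subset_UNIV[of "qv ` S"]
    by (simp add: vec.dimension_def card_cart_basis)
  finally have le: "card S \<le> CARD('n)" using cS by simp
  show ?thesis
  proof (rule ccontr)
    assume "\<not> ?thesis"
    then have eq: "card (qv ` S) = vec.dim (UNIV :: (rat ^ 'n) set)" using le cS
      by (simp add: card_cart_basis)
    have fin: "finite (qv ` S)" using vec.independent_bound_general[OF ind] by simp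
    have span: "UNIV \<subseteq> vec.span (qv ` S)"
      using vec.card_eq_dim[of "qv ` S" UNIV] eq fin ind by simp
    define L where "L x = (\<Sum>i\<in>UNIV. v $ i * real_of_rat (x $ i))" for x :: "rat ^ 'n"
    have Lsum: "L (\<Sum>w\<in>T. u w *s w) = (\<Sum>w\<in>T. real_of_rat (u w) * L w)" for T u
    proof -
      have "L (\<Sum>w\<in>T. u w *s w) = (\<Sum>i\<in>UNIV. \<Sum>w\<in>T. v $ i * (real_of_rat (u w) * real_of_rat (w $ i)))"
        unfolding L_def by (simp add: sum_component of_rat_sum of_rat_mult sum_distrib_left)
      also have "\<dots> = (\<Sum>w\<in>T. \<Sum>i\<in>UNIV. v $ i * (real_of_rat (u w) * real_of_rat (w $ i)))"
        by (rule sum.swap)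
      also have "\<dots> = (\<Sum>w\<in>T. real_of_rat (u w) * L w)"
        unfolding L_def by (simp add: sum_distrib_left algebra_simps)
      finally show ?thesis .
    qed
    have Lq: "L (qv s) = 0" if "s \<in> S" for s
      using sub that by (auto simp: L_def qv_def inner_rv)
    have "v $ j = 0" for j
    proof -
      have "axis j 1 \<in> vec.span (qv ` S)" using span[THEN subsetD, OF UNIV_I] .
      then obtain T u where T: "finite T" "T \<subseteq> qv ` S" and ax: "(\<Sum>w\<in>T. u w *s w) = axis j 1"
        unfolding vec.span_explicit by (auto simp only: mem_Collect_eq)
      have "L (axis j 1) = (\<Sum>w\<in>T. real_of_rat (u w) * L w)" using Lsum ax by metis
      also have "\<dots> = 0" using T Lq by (intro sum.neutral) auto
      finally show ?thesis by (simp add: L_def axis_def if_distrib cong: if_cong)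
    qed
    then show False using v by (simp add: vec_eq_iff)
  qed
qed

lemma hyper_rank:
  fixes v :: "real ^ 'n::finite"
  assumes v: "v \<noteq> 0"
  shows "grp_rank {a. v \<bullet> rv a = 0} < CARD('n)"
proof -
  let ?K = "{card S | S. S \<subseteq> {a. v \<bullet> rv a = 0} \<and> zindep S}"
  have sub: "?K \<subseteq> {..<CARD('n)}" using hyper_card[OF v] by auto
  have ne: "0 \<in> ?K" by (rule CollectI, rule exI[of _ "{}"]) (simp add: zindep_def)
  have "Max ?K < CARD('n)"
    using sub ne finite_subset[OF sub] by (subst Max_less_iff) auto
  then show ?thesis by (simp add: grp_rank_def)
qed

lemma e_mult: "e a * e b = e (a + b)"
  by (simp add: e_def mult_single)

lemma e_zero: "e 0 = 1"
  by (simp add: e_def)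

lemma keys_e: "Poly_Mapping.keys (e a) = {a}"
  by (simp add: e_def)

definition Pv :: "real ^ 'n::finite \<Rightarrow> 'n grpring \<Rightarrow> bool" where
  "Pv v x \<longleftrightarrow> (\<exists>y. x = 1 + y \<and> (\<forall>b\<in>Poly_Mapping.keys y. 0 < v \<bullet> rv b))"

lemma Pv_one: "Pv v 1"
  unfolding Pv_def by (rule exI[of _ 0]) simp

lemma Pv_mult:
  assumes "Pv v x" "Pv v x'" shows "Pv v (x * x')"
proof -
  obtain y where y: "x = 1 + y" "\<forall>b\<in>Poly_Mapping.keys y. 0 < v \<bullet> rv b" using assms(1) Pv_def by blast
  obtain z where z: "x' = 1 + z" "\<forall>b\<in>Poly_Mapping.keys z. 0 < v \<bullet> rv b" using assms(2) Pv_def by blast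
  have eq: "x * x' = 1 + (y + z + y * z)" unfolding y(1) z(1) by (simp add: ring_distribs add.assoc)
  have "Poly_Mapping.keys (y + z + y * z) \<subseteq> Poly_Mapping.keys y \<union> Poly_Mapping.keys z \<union> Poly_Mapping.keys (y * z)"
    using keys_add[of "y+z" "y*z"] keys_add[of y z] by blast
  moreover have "\<forall>b\<in>Poly_Mapping.keys (y * z). 0 < v \<bullet> rv b"
  proof
    fix b assume "b \<in> Poly_Mapping.keys (y * z)"
    then obtain c d where cd: "b = c + d" "c \<in> Poly_Mapping.keys y" "d \<in> Poly_Mapping.keys z"
      using keys_mult[of y z] by blast
    show "0 < v \<bullet> rv b" using y(2) z(2) cd by (simp add: rv_add inner_add_right add_pos_pos)
  qed
  ultimately have "\<forall>b\<in>Poly_Mapping.keys (y + z + y * z). 0 < v \<bullet> rv b" using y(2) z(2) by blast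
  then show ?thesis using eq Pv_def by blast
qed

definition Unt :: "'n::finite grpring \<Rightarrow> bool" where
  "Unt u \<longleftrightarrow> (\<exists>w. w * u = 1)"

lemma Unt_mult: assumes "Unt u" "Unt u'" shows "Unt (u * u')"
proof -
  obtain w where w: "w * u = 1" using assms(1) Unt_def by blast
  obtain w' where w': "w' * u' = 1" using assms(2) Unt_def by blast
  have "(w' * w) * (u * u') = w' * ((w * u) * u')" by (simp only: mult.assoc)
  also have "\<dots> = 1" by (simp only: w w' mult_1_left)
  finally show ?thesis unfolding Unt_def by blast
qed

lemma factor_decomp:
  fixes v :: "real ^ 'n::finite"
  assumes "v \<bullet> rv a \<noteq> 0"
  shows "\<exists>u x. Unt u \<and> Pv v x \<and> e a - 1 = u * x"
proof (cases "v \<bullet> rv a > 0")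
  case True
  have "Pv v (1 + - e a)" unfolding Pv_def using True by (auto simp: keys_e)
  moreover have "Unt (-1)" unfolding Unt_def by (rule exI[of _ "-1"]) simp
  moreover have "e a - 1 = (-1) * (1 + - e a)" by simp
  ultimately show ?thesis by blast
next
  case False
  then have neg: "v \<bullet> rv (- a) > 0" using assms by (simp add: rv_minus)
  have "Pv v (1 + - e (- a))" unfolding Pv_def using neg by (auto simp: keys_e)
  moreover have "Unt (e a)" unfolding Unt_def by (rule exI[of _ "e (- a)"]) (simp add: e_mult e_zero)
  moreover have "e a - 1 = e a * (1 + - e (- a))" by (simp only: distrib_left mult_1_right mult_minus_right e_mult) (simp add: e_zero)
  ultimately show ?thesis by blast
qed

lemma key1:
  fixes smul :: "'n::finite grpring \<Rightarrow> 'm::ab_group_add \<Rightarrow> 'm" and v :: "real ^ 'n"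
  assumes md: "module smul"
    and H: "\<forall>B. is_subgroup B \<and> grp_rank B < CARD('n) \<longrightarrow>
           (\<exists>k::nat. \<exists>a :: nat \<Rightarrow> 'n grp. k > 0 \<and> (\<forall>i<k. a i \<notin> B) \<and>
              (\<forall>m. smul (\<Prod>i<k. e (a i) - 1) m = 0))"
    and v: "v \<noteq> 0"
  shows "\<exists>y. (\<forall>b\<in>Poly_Mapping.keys y. 0 < v \<bullet> rv b) \<and> (\<forall>m. smul (1 + y) m = 0)"
proof -
  interpret module smul by (rule md)
  let ?B = "{a. v \<bullet> rv a = 0}"
  have "is_subgroup ?B" by (simp add: is_subgroup_def rv_diff rv_zero inner_diff_right)
  from H[rule_format, OF conjI[OF this hyper_rank[OF v]]]
  obtain k :: nat and a :: "nat \<Rightarrow> int ^ 'n" where k: "k > 0" and a: "\<forall>i<k. a i \<notin> ?B"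
      and ann: "\<forall>m. smul (\<Prod>i<k. e (a i) - 1) m = 0"
    by blast
  have "\<exists>u x. Unt u \<and> Pv v x \<and> (\<Prod>i<k'. e (a i) - 1) = u * x" if "k' \<le> k" for k'
    using that
  proof (induction k')
    case 0
    have "Unt 1" unfolding Unt_def by auto
    then show ?case using Pv_one[of v] by (intro exI[of _ 1]) simp
  next
    case (Suc k')
    then obtain u x where ux: "Unt u" "Pv v x" "(\<Prod>i<k'. e (a i) - 1) = u * x" by auto
    have "v \<bullet> rv (a k') \<noteq> 0" using a Suc.prems by auto
    then obtain u' x' where ux': "Unt u'" "Pv v x'" "e (a k') - 1 = u' * x'" using factor_decomp by blast
    have "(\<Prod>i<Suc k'. e (a i) - 1) = (u * u') * (x * x')" by (simp only: prod.lessThan_Suc ux(3) ux'(3) mult_ac)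
    then show ?case using Unt_mult[OF ux(1) ux'(1)] Pv_mult[OF ux(2) ux'(2)] by blast
  qed
  then obtain u x where ux: "Unt u" "Pv v x" "(\<Prod>i<k. e (a i) - 1) = u * x" by blast
  obtain w where w: "w * u = 1" using ux(1) Unt_def by blast
  obtain y where y: "x = 1 + y" "\<forall>b\<in>Poly_Mapping.keys y. 0 < v \<bullet> rv b" using ux(2) Pv_def by blast
  have "smul x m = 0" for m
  proof -
    have "smul x m = smul ((w * u) * x) m" using w by simp
    also have "\<dots> = smul w (smul (u * x) m)" by (simp only: scale_scale mult.assoc)
    also have "\<dots> = smul w (smul (\<Prod>i<k. e (a i) - 1) m)" by (simp only: ux(3))
    also have "\<dots> = 0" by (simp only: ann[rule_format] scale_zero_right)
    finally show ?thesis .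
  qed
  then show ?thesis using y by blast
qed

definition Zspan :: "('n::finite grpring \<Rightarrow> 'm::ab_group_add \<Rightarrow> 'm) \<Rightarrow> 'm set \<Rightarrow> 'm set" where
  "Zspan smul F = {x. \<exists>c :: 'm \<Rightarrow> int. x = (\<Sum>t\<in>F. smul (of_int (c t)) t)}"

context
  fixes smul :: "'n::finite grpring \<Rightarrow> 'm::ab_group_add \<Rightarrow> 'm"
  assumes md: "module smul"
begin

interpretation module smul by (rule md)

lemma Zspan_zero: "0 \<in> Zspan smul F"
  unfolding Zspan_def by (rule CollectI, rule exI[of _ "\<lambda>_. 0"]) simp

lemma Zspan_add: "x \<in> Zspan smul F \<Longrightarrow> y \<in> Zspan smul F \<Longrightarrow> x + y \<in> Zspan smul F"
  unfolding Zspan_def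
proof (elim CollectE exE, intro CollectI)
  fix c c' assume "x = (\<Sum>t\<in>F. smul (of_int (c t)) t)" "y = (\<Sum>t\<in>F. smul (of_int (c' t)) t)"
  then show "\<exists>d. x + y = (\<Sum>t\<in>F. smul (of_int (d t)) t)"
    by (intro exI[of _ "\<lambda>t. c t + c' t"]) (simp add: sum.distrib scale_left_distrib)
qed

lemma Zspan_neg: "x \<in> Zspan smul F \<Longrightarrow> - x \<in> Zspan smul F"
  unfolding Zspan_def
proof (elim CollectE exE, intro CollectI)
  fix c assume "x = (\<Sum>t\<in>F. smul (of_int (c t)) t)"
  then show "\<exists>d. - x = (\<Sum>t\<in>F. smul (of_int (d t)) t)"
    by (intro exI[of _ "\<lambda>t. - c t"]) (simp add: sum_negf)
qed

lemma Zspan_scale: "x \<in> Zspan smul F \<Longrightarrow> smul (of_int k) x \<in> Zspan smul F"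
  unfolding Zspan_def
proof (elim CollectE exE, intro CollectI)
  fix c assume "x = (\<Sum>t\<in>F. smul (of_int (c t)) t)"
  then show "\<exists>d. smul (of_int k) x = (\<Sum>t\<in>F. smul (of_int (d t)) t)"
    by (intro exI[of _ "\<lambda>t. k * c t"]) (simp add: scale_sum_right)
qed

lemma Zspan_sum: "(\<And>i. i \<in> I \<Longrightarrow> f i \<in> Zspan smul F) \<Longrightarrow> sum f I \<in> Zspan smul F"
  by (induction I rule: infinite_finite_induct) (auto simp: Zspan_zero Zspan_add)

lemma Zspan_gen: assumes "finite F" "t \<in> F" shows "t \<in> Zspan smul F"
proof -
  have "(\<Sum>t'\<in>F. smul (of_int (if t' = t then 1 else 0)) t') = (\<Sum>t'\<in>F. if t' = t then t else 0)"
    by (rule sum.cong) auto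
  also have "\<dots> = t" using assms by simp
  finally show ?thesis unfolding Zspan_def by (intro CollectI exI[of _ "\<lambda>t'. if t' = t then 1 else 0"]) simp
qed

end

lemma ofint_e: "of_int c * e b = Poly_Mapping.single b c"
proof -
  have h: "(of_int c :: 'n::finite grpring) = Poly_Mapping.single 0 c"
  proof -
    have "Poly_Mapping.single (0::'n grp) (of_int c :: int) = of_int c" by (rule single_of_int)
    then show ?thesis by simp
  qed
  show ?thesis unfolding e_def h mult_single by simp
qed

lemma pm_expand: "(r :: 'n::finite grpring) = (\<Sum>b\<in>Poly_Mapping.keys r. of_int (Poly_Mapping.lookup r b) * e b)"
proof (rule poly_mapping_eqI)
  fix k
  have "Poly_Mapping.lookup (\<Sum>b\<in>Poly_Mapping.keys r. of_int (Poly_Mapping.lookup r b) * e b) k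
      = (\<Sum>b\<in>Poly_Mapping.keys r. if b = k then Poly_Mapping.lookup r b else 0)"
    by (simp add: lookup_sum ofint_e lookup_single when_def)
  also have "\<dots> = Poly_Mapping.lookup r k"
    by (simp add: in_keys_iff)
  finally show "Poly_Mapping.lookup r k = Poly_Mapping.lookup (\<Sum>b\<in>Poly_Mapping.keys r. of_int (Poly_Mapping.lookup r b) * e b) k"
    by simp
qed

lemma smul_Zspan:
  fixes smul :: "'n::finite grpring \<Rightarrow> 'm::ab_group_add \<Rightarrow> 'm"
  assumes md: "module smul" and gen: "\<And>b. smul (e b) s \<in> Zspan smul F"
  shows "smul r s \<in> Zspan smul F"
proof -
  interpret module smul by (rule md)
  have "smul r s = (\<Sum>b\<in>Poly_Mapping.keys r. smul (of_int (Poly_Mapping.lookup r b) * e b) s)"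
    by (subst pm_expand[of r]) (simp only: scale_sum_left)
  also have "\<dots> = (\<Sum>b\<in>Poly_Mapping.keys r. smul (of_int (Poly_Mapping.lookup r b)) (smul (e b) s))"
    by (simp only: scale_scale)
  also have "\<dots> \<in> Zspan smul F"
    by (intro Zspan_sum[OF md] Zspan_scale[OF md] gen)
  finally show ?thesis .
qed


definition nsqi :: "int ^ 'n::finite \<Rightarrow> int" where
  "nsqi a = (\<Sum>i\<in>UNIV. (a $ i)^2)"

lemma nsqi_real: "real_of_int (nsqi a) = rv a \<bullet> rv a"
  by (simp add: nsqi_def inner_vec_def rv_def power2_eq_square)

lemma nsqi_nonneg: "0 \<le> nsqi a"
  by (simp add: nsqi_def sum_nonneg)

lemma comp_le_nsqi: "(a $ i)^2 \<le> nsqi a"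
  unfolding nsqi_def by (rule member_le_sum) auto

lemma abs_le_sq: "\<bar>x::int\<bar> \<le> x^2"
proof (cases "x = 0")
  case False
  then have "1 \<le> \<bar>x\<bar>" by simp
  then have "\<bar>x\<bar> * 1 \<le> \<bar>x\<bar> * \<bar>x\<bar>" by (intro mult_left_mono) auto
  then show ?thesis by (simp add: power2_eq_square abs_mult_self_eq)
qed simp

lemma nsqi_ge1: assumes "a \<noteq> 0" shows "1 \<le> nsqi a"
proof -
  obtain i where i: "a $ i \<noteq> 0" using assms by (auto simp: vec_eq_iff)
  have "1 \<le> \<bar>a $ i\<bar>" using i by simp
  then have "1 \<le> (a $ i)^2" using abs_le_sq[of "a $ i"] by linarith
  then show ?thesis using comp_le_nsqi[of a i] by linarith
qed

lemma norm_rv_ge1: assumes "a \<noteq> 0" shows "1 \<le> norm (rv a)"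
proof -
  have "1 \<le> rv a \<bullet> rv a" using nsqi_ge1[OF assms] nsqi_real[of a] by linarith
  then show ?thesis by (simp add: norm_eq_sqrt_inner)
qed

lemma finite_vecs: assumes "finite A" shows "finite {b :: 'a ^ 'n::finite. \<forall>i. b $ i \<in> A}"
proof -
  have "vec_nth ` {b :: 'a ^ 'n. \<forall>i. b $ i \<in> A} \<subseteq> PiE UNIV (\<lambda>_. A)"
    by (auto simp: PiE_iff)
  moreover have "finite (PiE (UNIV :: 'n set) (\<lambda>_. A))" using assms by (intro finite_PiE) auto
  ultimately have "finite (vec_nth ` {b :: 'a ^ 'n. \<forall>i. b $ i \<in> A})" by (rule finite_subset)
  then show ?thesis by (rule finite_imageD) (auto simp: inj_on_def vec_nth_inject)
qed

lemma cover:
  fixes smul :: "'n::finite grpring \<Rightarrow> 'm::ab_group_add \<Rightarrow> 'm"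
  assumes md: "module smul"
    and H: "\<forall>B. is_subgroup B \<and> grp_rank B < CARD('n) \<longrightarrow>
           (\<exists>k::nat. \<exists>a :: nat \<Rightarrow> 'n grp. k > 0 \<and> (\<forall>i<k. a i \<notin> B) \<and>
              (\<forall>m. smul (\<Prod>i<k. e (a i) - 1) m = 0))"
  obtains Y0 \<epsilon> where "finite Y0" "\<epsilon> > 0" "\<forall>y\<in>Y0. \<forall>m. smul (1 + y) m = 0"
    "\<forall>u\<in>sphere (0::real^'n) 1. \<exists>y\<in>Y0. \<forall>b\<in>Poly_Mapping.keys y. \<epsilon> \<le> u \<bullet> rv b"
proof -
  define U where "U (y :: 'n grpring) = {w::real^'n. \<forall>b\<in>Poly_Mapping.keys y. 0 < w \<bullet> rv b}" for y
  define Yall where "Yall = {y :: 'n grpring. \<forall>m. smul (1 + y) m = 0}"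
  have opn: "open (U y)" for y
  proof -
    have "U y = (\<Inter>b\<in>Poly_Mapping.keys y. {w. 0 < w \<bullet> rv b})" by (auto simp: U_def)
    moreover have "open {w::real^'n. 0 < w \<bullet> rv b}" for b
      by (intro open_Collect_less continuous_intros)
    ultimately show ?thesis by (auto intro: open_INT)
  qed
  have covr: "sphere (0::real^'n) 1 \<subseteq> (\<Union>y\<in>Yall. U y)"
  proof
    fix u :: "real^'n" assume "u \<in> sphere 0 1"
    then have "u \<noteq> 0" by auto
    from key1[OF md H this] obtain y where "\<forall>b\<in>Poly_Mapping.keys y. 0 < u \<bullet> rv b" "\<forall>m. smul (1 + y) m = 0"
      by blast
    then show "u \<in> (\<Union>y\<in>Yall. U y)" by (auto simp: U_def Yall_def)
  qed
  obtain Y0 where Y0: "Y0 \<subseteq> Yall" "finite Y0" "sphere (0::real^'n) 1 \<subseteq> (\<Union>y\<in>Y0. U y)"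
    using compactE_image[OF compact_sphere[of "0::real^'n" 1] opn covr] by blast
  obtain \<epsilon> where eps: "\<epsilon> > 0" "\<And>x. x \<in> sphere (0::real^'n) 1 \<Longrightarrow> \<exists>G\<in>U ` Y0. ball x \<epsilon> \<subseteq> G"
    using Heine_Borel_lemma[OF compact_sphere[of "0::real^'n" 1], of "U ` Y0"] Y0(3) opn by blast
  have main: "\<exists>y\<in>Y0. \<forall>b\<in>Poly_Mapping.keys y. \<epsilon> / 2 \<le> u \<bullet> rv b" if u: "u \<in> sphere 0 1" for u
  proof -
    obtain y where y: "y \<in> Y0" "ball u \<epsilon> \<subseteq> U y" using eps(2)[OF u] by blast
    have "\<epsilon> / 2 \<le> u \<bullet> rv b" if b: "b \<in> Poly_Mapping.keys y" for b
    proof -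
      have "u \<in> U y" using y(2) eps(1) by auto
      then have "0 < u \<bullet> rv b" using b U_def by blast
      then have "b \<noteq> 0" by (auto simp: rv_zero)
      then have nb: "1 \<le> norm (rv b)" by (rule norm_rv_ge1)
      define w where "w = u - (\<epsilon> / (2 * norm (rv b))) *\<^sub>R rv b"
      have "rv b \<noteq> 0" using nb by auto
      then have "dist u w = \<epsilon> / 2" using nb eps(1) by (simp add: w_def dist_norm)
      then have "w \<in> ball u \<epsilon>" using eps(1) by simp
      then have "0 < w \<bullet> rv b" using y(2) b U_def by blast
      also have "w \<bullet> rv b = u \<bullet> rv b - (\<epsilon> / (2 * norm (rv b))) * (norm (rv b))^2"
        by (simp add: w_def inner_diff_left power2_norm_eq_inner)
      also have "\<dots> = u \<bullet> rv b - \<epsilon> / 2 * norm (rv b)"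
        using nb by (simp add: power2_eq_square field_simps)
      finally have "\<epsilon> / 2 * norm (rv b) < u \<bullet> rv b" by simp
      moreover have "\<epsilon> / 2 \<le> \<epsilon> / 2 * norm (rv b)" using nb eps(1) by simp
      ultimately show ?thesis by linarith
    qed
    then show ?thesis using y(1) by blast
  qed
  show ?thesis
    by (rule that[of Y0 "\<epsilon> / 2"]) (use Y0 eps main Yall_def in auto)
qed


theorem theoremD:
  fixes smul :: "'n::finite grpring \<Rightarrow> 'm::ab_group_add \<Rightarrow> 'm"
  assumes "module smul"
    and "\<exists>S. finite S \<and> module.span smul S = UNIV"
    and "\<forall>B. is_subgroup B \<and> grp_rank B < CARD('n) \<longrightarrow>
           (\<exists>k::nat. \<exists>a :: nat \<Rightarrow> 'n grp. k > 0 \<and> (\<forall>i<k. a i \<notin> B) \<and>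
              (\<forall>m. smul (\<Prod>i<k. e (a i) - 1) m = 0))"
  shows "fg_abelian smul"
proof -
  note md = assms(1)
  interpret module smul by (rule md)
  obtain S0 where S0: "finite S0" "span S0 = UNIV" using assms(2) by blast
  obtain Y0 \<epsilon> where Y0: "finite Y0" and eps: "\<epsilon> > 0" and ann: "\<forall>y\<in>Y0. \<forall>m. smul (1 + y) m = 0"
    and cov: "\<forall>u\<in>sphere (0::real^'n) 1. \<exists>y\<in>Y0. \<forall>b\<in>Poly_Mapping.keys y. \<epsilon> \<le> u \<bullet> rv b"
    using cover[OF md assms(3)] by blast
  define C where "C = (\<Sum>y\<in>Y0. \<Sum>b\<in>Poly_Mapping.keys y. nsqi b)"
  have bnd: "nsqi b \<le> C" if "y \<in> Y0" "b \<in> Poly_Mapping.keys y" for y b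
  proof -
    have "nsqi b \<le> (\<Sum>b\<in>Poly_Mapping.keys y. nsqi b)"
      using that by (intro member_le_sum) (auto simp: nsqi_nonneg)
    also have "\<dots> \<le> C" unfolding C_def
      using that Y0 by (intro member_le_sum) (auto simp: nsqi_nonneg sum_nonneg)
    finally show ?thesis .
  qed
  have C0: "0 \<le> C" unfolding C_def by (simp add: nsqi_nonneg sum_nonneg)
  define K where "K = (real_of_int C / (2 * \<epsilon>))^2"
  define Bs where "Bs = {b :: int ^ 'n. real_of_int (nsqi b) \<le> K}"
  have finBs: "finite Bs"
  proof -
    have "Bs \<subseteq> {b :: int ^ 'n. \<forall>i. b $ i \<in> {-\<lceil>K\<rceil>..\<lceil>K\<rceil>}}"
    proof (intro subsetI CollectI allI)
      fix b i assume "b \<in> Bs"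
      then have "real_of_int (nsqi b) \<le> K" by (simp add: Bs_def)
      then have "nsqi b \<le> \<lceil>K\<rceil>" by linarith
      moreover have "\<bar>b $ i\<bar> \<le> nsqi b" using abs_le_sq[of "b $ i"] comp_le_nsqi[of b i] by linarith
      ultimately show "b $ i \<in> {-\<lceil>K\<rceil>..\<lceil>K\<rceil>}" by auto
    qed
    then show ?thesis using finite_vecs[of "{-\<lceil>K\<rceil>..\<lceil>K\<rceil>}"] finite_subset by blast
  qed
  define F where "F = (\<lambda>p. smul (e (fst p)) (snd p)) ` (Bs \<times> S0)"
  have finF: "finite F" unfolding F_def using finBs S0(1) by simp
  have desc: "\<forall>a :: int ^ 'n. nat (nsqi a) = n \<longrightarrow> (\<forall>s\<in>S0. smul (e a) s \<in> Zspan smul F)" for n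
  proof (induction n rule: less_induct)
    case (less n)
    show ?case
    proof (intro allI impI ballI)
      fix a :: "int ^ 'n" and s assume an: "nat (nsqi a) = n" and s: "s \<in> S0"
      show "smul (e a) s \<in> Zspan smul F"
      proof (cases "real_of_int (nsqi a) \<le> K")
        case True
        then have "smul (e a) s \<in> F" unfolding F_def using s
          by (intro image_eqI[of _ _ "(a, s)"]) (auto simp: Bs_def)
        then show ?thesis by (rule Zspan_gen[OF md finF])
      next
        case False
        define na where "na = norm (rv a)"
        have na2: "na^2 = real_of_int (nsqi a)" by (simp add: na_def nsqi_real power2_norm_eq_inner)
        have q0: "0 \<le> real_of_int C / (2 * \<epsilon>)" using C0 eps by simp
        have "(real_of_int C / (2 * \<epsilon>))^2 < na^2" using False na2 K_def by simp
        then have nabig: "real_of_int C / (2 * \<epsilon>) < na"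
          using power_less_imp_less_base[of _ 2 na] na_def by simp
        then have napos: "0 < na" using q0 by linarith
        have Cna: "real_of_int C < 2 * \<epsilon> * na" using nabig eps by (simp add: field_simps)
        define u where "u = - (1 / na) *\<^sub>R rv a"
        have "u \<in> sphere 0 1" using napos by (simp add: u_def na_def)
        then obtain y where y: "y \<in> Y0" "\<forall>b\<in>Poly_Mapping.keys y. \<epsilon> \<le> u \<bullet> rv b" using cov by blast
        have smaller: "nat (nsqi (a + b)) < n" if b: "b \<in> Poly_Mapping.keys y" for b
        proof -
          have "u \<bullet> rv b = - (rv a \<bullet> rv b) / na" by (simp add: u_def)
          then have "rv a \<bullet> rv b = - na * (u \<bullet> rv b)" using napos by (simp add: field_simps)
          moreover have "na * \<epsilon> \<le> na * (u \<bullet> rv b)" using y(2) b napos by simp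
          ultimately have ab: "rv a \<bullet> rv b \<le> - na * \<epsilon>" by simp
          have "real_of_int (nsqi (a + b)) = rv a \<bullet> rv a + 2 * (rv a \<bullet> rv b) + rv b \<bullet> rv b"
            by (simp add: nsqi_real rv_add inner_add_left inner_add_right inner_commute)
          also have "\<dots> \<le> real_of_int (nsqi a) - 2 * na * \<epsilon> + real_of_int C"
            using ab bnd[OF y(1) b] nsqi_real[of a] nsqi_real[of b] by linarith
          also have "\<dots> < real_of_int (nsqi a)" using Cna by (simp add: algebra_simps)
          finally have "nsqi (a + b) < nsqi a" by linarith
          then show ?thesis using an nsqi_nonneg[of "a + b"] by linarith
        qed
        have IH: "smul (e (a + b)) s \<in> Zspan smul F" if "b \<in> Poly_Mapping.keys y" for b
          using less.IH[OF smaller[OF that]] s by blast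
        have ey: "e a * y = (\<Sum>b\<in>Poly_Mapping.keys y. of_int (Poly_Mapping.lookup y b) * e (a + b))"
        proof -
          have "e a * y = e a * (\<Sum>b\<in>Poly_Mapping.keys y. of_int (Poly_Mapping.lookup y b) * e b)"
            by (subst pm_expand[of y]) (rule refl)
          also have "\<dots> = (\<Sum>b\<in>Poly_Mapping.keys y. of_int (Poly_Mapping.lookup y b) * (e a * e b))"
            by (simp add: sum_distrib_left mult.left_commute)
          finally show ?thesis by (simp add: e_mult)
        qed
        have "0 = smul (e a) (smul (1 + y) s)" using ann y(1) by simp
        also have "\<dots> = smul (e a * (1 + y)) s" by (rule scale_scale)
        also have "\<dots> = smul (e a) s + smul (e a * y) s"
          by (simp only: distrib_left mult_1_right scale_left_distrib)
        also have "smul (e a * y) s = (\<Sum>b\<in>Poly_Mapping.keys y. smul (of_int (Poly_Mapping.lookup y b)) (smul (e (a + b)) s))"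
          by (simp only: ey scale_sum_left scale_scale)
        finally have "smul (e a) s = - (\<Sum>b\<in>Poly_Mapping.keys y. smul (of_int (Poly_Mapping.lookup y b)) (smul (e (a + b)) s))"
          by (simp add: eq_neg_iff_add_eq_0)
        also have "\<dots> \<in> Zspan smul F"
          by (intro Zspan_neg[OF md] Zspan_sum[OF md] Zspan_scale[OF md] IH)
        finally show ?thesis .
      qed
    qed
  qed
  have gen: "smul (e b) s \<in> Zspan smul F" if "s \<in> S0" for b s
    using desc[of "nat (nsqi b)"] that by blast
  have all: "m \<in> Zspan smul F" for m
  proof -
    have "m \<in> span S0" using S0(2) by simp
    then have "\<exists>t r. finite t \<and> t \<subseteq> S0 \<and> m = (\<Sum>a\<in>t. smul (r a) a)"
      unfolding span_explicit by blast
    then obtain t r where t: "finite t" "t \<subseteq> S0" and m: "m = (\<Sum>a\<in>t. smul (r a) a)"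
      by blast
    have "(\<Sum>a\<in>t. smul (r a) a) \<in> Zspan smul F"
    proof (rule Zspan_sum[OF md])
      fix a assume "a \<in> t"
      then have "a \<in> S0" using t by blast
      then show "smul (r a) a \<in> Zspan smul F" by (rule smul_Zspan[OF md gen])
    qed
    then show ?thesis using m by simp
  qed
  show ?thesis unfolding fg_abelian_def
    using finF all by (auto simp: Zspan_def)
qed

end
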